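(* There is an absolute constant $C>0$ such that for every $\varepsilon\in(0,1/2)$, every $m\geq1$ and every family of $m$ linear orders $\leq_1,\dots,\leq_m$ on a finite set $V$, the $(1/2-\varepsilon)$-majority digraph of $(\leq_1,\dots,\leq_m)$ has domination number at most $C/\varepsilon^2$.
   Context: For $c\in[0,1]$, the $c$-majority digraph of linear orders $\leq_1,\dots,\leq_m$ on $V$ is the digraph on $V$ with an arc $xy$ ($x\neq y$) whenever $|\{i\in[m]:x<_iy\}|\geq cm$. The domination number of a digraph is the minimum size of a set $X$ such that every vertex $v$ is in $X$ or has an in-neighbour in $X$. *)

theory Defs
  imports Complex_Main
begin

definition strict_lt :: "'a rel \<Rightarrow> 'a \<Rightarrow> 'a \<Rightarrow> bool" where
  "strict_lt R x y \<longleftrightarrow> (x, y) \<in> R \<and> x \<noteq> y"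

definition majority_arc :: "real \<Rightarrow> nat \<Rightarrow> (nat \<Rightarrow> 'a rel) \<Rightarrow> 'a set \<Rightarrow> 'a \<Rightarrow> 'a \<Rightarrow> bool" where
  "majority_arc c m L V x y \<longleftrightarrow> x \<in> V \<and> y \<in> V \<and> x \<noteq> y \<and>
     real (card {i. i < m \<and> strict_lt (L i) x y}) \<ge> c * real m"

definition dominating :: "'a set \<Rightarrow> ('a \<Rightarrow> 'a \<Rightarrow> bool) \<Rightarrow> 'a set \<Rightarrow> bool" where
  "dominating V E X \<longleftrightarrow> X \<subseteq> V \<and> (\<forall>v\<in>V. v \<in> X \<or> (\<exists>x\<in>X. E x v))"

definition domination_number :: "'a set \<Rightarrow> ('a \<Rightarrow> 'a \<Rightarrow> bool) \<Rightarrow> nat" where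
  "domination_number V E = (LEAST k. \<exists>X. dominating V E X \<and> card X = k)"

end

theory Submission
  imports Defs
begin


locale morders =
  fixes V :: "nat set" and L :: "nat \<Rightarrow> nat rel" and m :: nat
  assumes finV: "finite V" and m1: "m \<ge> 1"
    and lin: "\<And>i. i < m \<Longrightarrow> linear_order_on V (L i)"
begin

lemma refl_L: "i < m \<Longrightarrow> x \<in> V \<Longrightarrow> (x,x) \<in> L i"
  using lin[of i] unfolding linear_order_on_def partial_order_on_def preorder_on_def refl_on_def by blast

lemma total_L: "i < m \<Longrightarrow> x \<in> V \<Longrightarrow> y \<in> V \<Longrightarrow> x \<noteq> y \<Longrightarrow> (x,y) \<in> L i \<or> (y,x) \<in> L i"
  using lin[of i] unfolding linear_order_on_def total_on_def by blast

lemma antisym_L: "i < m \<Longrightarrow> (x,y) \<in> L i \<Longrightarrow> (y,x) \<in> L i \<Longrightarrow> x = y"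
  using lin[of i] unfolding linear_order_on_def partial_order_on_def antisym_def by blast

lemma trans_L: "i < m \<Longrightarrow> (x,y) \<in> L i \<Longrightarrow> (y,z) \<in> L i \<Longrightarrow> (x,z) \<in> L i"
  using lin[of i] unfolding linear_order_on_def partial_order_on_def preorder_on_def trans_def by blast

definition cnt :: "nat \<Rightarrow> nat \<Rightarrow> nat" where
  "cnt x v = card {i. i < m \<and> (x,v) \<in> L i}"

lemma cnt_le: "cnt x v \<le> m"
proof -
  have "cnt x v \<le> card {..<m}" unfolding cnt_def by (rule card_mono) auto
  thus ?thesis by simp
qed

lemma cnt_sym:
  assumes "x \<in> V" "v \<in> V"
  shows "real (cnt x v) + real (cnt v x) = (if x = v then 2 * real m else real m)"
proof (cases "x = v")
  case True
  have "{i. i < m \<and> (v,v) \<in> L i} = {..<m}" using refl_L assms by auto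
  thus ?thesis using True unfolding cnt_def by simp
next
  case False
  have U: "{i. i < m \<and> (x,v) \<in> L i} \<union> {i. i < m \<and> (v,x) \<in> L i} = {..<m}"
    using total_L[OF _ assms False] by auto
  have D: "{i. i < m \<and> (x,v) \<in> L i} \<inter> {i. i < m \<and> (v,x) \<in> L i} = {}"
    using antisym_L False by blast
  have "card {i. i < m \<and> (x,v) \<in> L i} + card {i. i < m \<and> (v,x) \<in> L i} = m"
    using card_Un_disjoint[of "{i. i < m \<and> (x,v) \<in> L i}" "{i. i < m \<and> (v,x) \<in> L i}"] U D by simp
  then show ?thesis using False unfolding cnt_def by (simp flip: of_nat_add)
qed

definition G :: "nat \<Rightarrow> nat \<Rightarrow> real" where
  "G x v = real (cnt x v) / real m - 1/2"

lemma G_sym: "x \<in> V \<Longrightarrow> v \<in> V \<Longrightarrow> G x v + G v x = (if x = v then 1 else 0)"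
proof -
  assume a: "x \<in> V" "v \<in> V"
  have mpos: "real m > 0" using m1 by simp
  have "G x v + G v x = (real (cnt x v) + real (cnt v x)) / real m - 1"
    unfolding G_def by (simp add: add_divide_distrib)
  also have "\<dots> = (if x = v then 1 else 0)" using cnt_sym[OF a] mpos by auto
  finally show ?thesis .
qed

lemma G_abs: "\<bar>G x v\<bar> \<le> 1/2"
proof -
  have mpos: "real m > 0" using m1 by simp
  have "real (cnt x v) \<le> real m" using cnt_le by simp
  hence "real (cnt x v) / real m \<le> 1" using mpos by simp
  moreover have "real (cnt x v) / real m \<ge> 0" by simp
  ultimately show ?thesis unfolding G_def by linarith
qed

definition Phi :: "(nat \<Rightarrow> real) \<Rightarrow> real" where
  "Phi u = (\<Sum>v\<in>V. (min (u v) 0)^2)"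

lemma sq_step: "(min (a+b) 0)^2 \<le> (min a 0)^2 + 2*min a 0*b + b^2" for a b :: real
proof (cases "a \<le> 0")
  case True
  have "(min (a+b) 0)^2 \<le> (a+b)^2"
    by (cases "a + b \<le> 0") (auto simp: min_def)
  also have "\<dots> = (min a 0)^2 + 2*min a 0*b + b^2" using True by (simp add: min_def power2_eq_square algebra_simps)
  finally show ?thesis .
next
  case False
  have "(min (a+b) 0)^2 \<le> b^2"
  proof (cases "a + b \<le> 0")
    case True
    hence "\<bar>a+b\<bar> \<le> \<bar>b\<bar>" using False by linarith
    hence "\<bar>a+b\<bar>^2 \<le> \<bar>b\<bar>^2" by (intro power_mono) auto
    hence "(a+b)^2 \<le> b^2" by simp
    thus ?thesis using True by (simp add: min_def)
  qed (simp add: min_def)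
  thus ?thesis using False by (simp add: min_def)
qed

lemma quad_nonneg: "0 \<le> (\<Sum>x\<in>V. \<Sum>v\<in>V. w x * w v * G x v)"
proof -
  let ?S = "\<Sum>x\<in>V. \<Sum>v\<in>V. w x * w v * G x v"
  have S2: "?S = (\<Sum>x\<in>V. \<Sum>v\<in>V. w x * w v * G v x)"
    by (subst sum.swap) (simp add: mult.commute mult.left_commute)
  have "2 * ?S = (\<Sum>x\<in>V. \<Sum>v\<in>V. w x * w v * (G x v + G v x))"
    by (subst mult_2, subst (2) S2) (simp add: sum.distrib distrib_left)
  also have "\<dots> = (\<Sum>x\<in>V. \<Sum>v\<in>V. (if x = v then w x * w x else 0))"
    by (intro sum.cong refl) (simp add: G_sym)
  also have "\<dots> = (\<Sum>x\<in>V. w x * w x)" using finV by simp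
  also have "\<dots> \<ge> 0" by (intro sum_nonneg) simp
  finally show ?thesis by simp
qed

lemma phi_bound:
  assumes q0: "\<forall>x\<in>V. q x \<ge> 0" and q1: "(\<Sum>x\<in>V. q x) = 1"
  shows "Phi (\<lambda>v. u v + (\<Sum>x\<in>V. q x * G x v)) \<le>
         Phi u - 2 * (\<Sum>v\<in>V. (- min (u v) 0) * (\<Sum>x\<in>V. q x * G x v)) + real (card V) / 4"
proof -
  define b where "b v = (\<Sum>x\<in>V. q x * G x v)" for v
  have bb: "(b v)^2 \<le> 1/4" for v
  proof -
    have "\<bar>b v\<bar> \<le> (\<Sum>x\<in>V. \<bar>q x * G x v\<bar>)" unfolding b_def by (rule sum_abs)
    also have "\<dots> \<le> (\<Sum>x\<in>V. q x * (1/2))"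
    proof (intro sum_mono)
      fix x assume "x \<in> V"
      hence "q x \<ge> 0" using q0 by auto
      thus "\<bar>q x * G x v\<bar> \<le> q x * (1/2)" using G_abs[of x v] mult_left_mono[of "\<bar>G x v\<bar>" "1/2" "q x"] by (simp add: abs_mult)
    qed
    also have "\<dots> = 1/2" using q1 by (simp flip: sum_divide_distrib)
    finally have "\<bar>b v\<bar> \<le> 1/2" .
    hence "\<bar>b v\<bar>^2 \<le> (1/2)^2" by (intro power_mono) auto
    thus ?thesis by (simp add: power2_eq_square)
  qed
  have "Phi (\<lambda>v. u v + b v) \<le> (\<Sum>v\<in>V. (min (u v) 0)^2 + 2*min (u v) 0*b v + 1/4)"
    unfolding Phi_def
  proof (intro sum_mono)
    fix v show "(min (u v + b v) 0)^2 \<le> (min (u v) 0)^2 + 2*min (u v) 0*b v + 1/4"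
      using sq_step[of "u v" "b v"] bb[of v] by linarith
  qed
  also have "\<dots> = Phi u - 2 * (\<Sum>v\<in>V. (- min (u v) 0) * b v) + real (card V) / 4"
    unfolding Phi_def sum.distrib by (simp add: sum_distrib_left sum_negf mult.assoc)
  finally show ?thesis unfolding b_def .
qed

lemma step:
  assumes "V \<noteq> {}"
  shows "\<exists>q. (\<forall>x\<in>V. q x \<ge> 0) \<and> (\<Sum>x\<in>V. q x) = 1 \<and>
     Phi (\<lambda>v. u v + (\<Sum>x\<in>V. q x * G x v)) \<le> Phi u + real (card V) / 4"
proof -
  define w where "w v = - min (u v) 0" for v
  have w0: "w v \<ge> 0" for v unfolding w_def by simp
  define Z where "Z = (\<Sum>v\<in>V. w v)"
  show ?thesis
  proof (cases "Z = 0")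
    case True
    hence wz: "\<forall>v\<in>V. w v = 0" using sum_nonneg_eq_0_iff[OF finV] w0 unfolding Z_def by blast
    obtain x0 where x0: "x0 \<in> V" using assms by blast
    define q where "q x = (if x = x0 then 1 else 0::real)" for x
    have q1: "(\<Sum>x\<in>V. q x) = 1" unfolding q_def using x0 finV by simp
    have q0: "\<forall>x\<in>V. q x \<ge> 0" unfolding q_def by simp
    have "(\<Sum>v\<in>V. (- min (u v) 0) * (\<Sum>x\<in>V. q x * G x v)) = 0"
      using wz unfolding w_def by simp
    note pb = phi_bound[OF q0 q1, of u]
    show ?thesis
    proof (intro exI[of _ q] conjI)
      show "Phi (\<lambda>v. u v + (\<Sum>x\<in>V. q x * G x v)) \<le> Phi u + real (card V) / 4"
        using pb \<open>(\<Sum>v\<in>V. (- min (u v) 0) * (\<Sum>x\<in>V. q x * G x v)) = 0\<close> by linarith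
    qed (use q0 q1 in auto)
  next
    case False
    have "Z \<ge> 0" unfolding Z_def using w0 by (simp add: sum_nonneg)
    hence Zp: "Z > 0" using False by linarith
    define q where "q x = w x / Z" for x
    have q1: "(\<Sum>x\<in>V. q x) = 1" unfolding q_def using Zp by (simp flip: sum_divide_distrib add: Z_def)
    have q0: "\<forall>x\<in>V. q x \<ge> 0" unfolding q_def using w0 Zp by simp
    have "(\<Sum>v\<in>V. w v * (\<Sum>x\<in>V. q x * G x v)) = (\<Sum>v\<in>V. \<Sum>x\<in>V. w x * w v * G x v / Z)"
      unfolding q_def sum_distrib_left by (intro sum.cong refl) (simp add: ac_simps)
    also have "\<dots> = (\<Sum>x\<in>V. \<Sum>v\<in>V. w x * w v * G x v / Z)"
      by (rule sum.swap)
    also have "\<dots> = (\<Sum>x\<in>V. \<Sum>v\<in>V. w x * w v * G x v) / Z"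
      by (simp add: sum_divide_distrib)
    also have "\<dots> \<ge> 0" using quad_nonneg Zp by simp
    finally have "(\<Sum>v\<in>V. (- min (u v) 0) * (\<Sum>x\<in>V. q x * G x v)) \<ge> 0" unfolding w_def .
    note pb = phi_bound[OF q0 q1, of u]
    show ?thesis
    proof (intro exI[of _ q] conjI)
      show "Phi (\<lambda>v. u v + (\<Sum>x\<in>V. q x * G x v)) \<le> Phi u + real (card V) / 4"
        using pb \<open>(\<Sum>v\<in>V. (- min (u v) 0) * (\<Sum>x\<in>V. q x * G x v)) \<ge> 0\<close> by linarith
    qed (use q0 q1 in auto)
  qed
qed

lemma iter:
  assumes "V \<noteq> {}"
  shows "\<exists>P. (\<forall>x\<in>V. P x \<ge> 0) \<and> (\<Sum>x\<in>V. P x) = real T \<and>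
            Phi (\<lambda>v. \<Sum>x\<in>V. P x * G x v) \<le> real T * real (card V) / 4"
proof (induction T)
  case 0
  show ?case by (rule exI[of _ "\<lambda>_. 0"]) (simp add: Phi_def)
next
  case (Suc T)
  then obtain P where P0: "\<forall>x\<in>V. P x \<ge> 0" and P1: "(\<Sum>x\<in>V. P x) = real T"
    and P2: "Phi (\<lambda>v. \<Sum>x\<in>V. P x * G x v) \<le> real T * real (card V) / 4" by blast
  obtain q where q0: "\<forall>x\<in>V. q x \<ge> 0" and q1: "(\<Sum>x\<in>V. q x) = 1"
    and q2: "Phi (\<lambda>v. (\<Sum>x\<in>V. P x * G x v) + (\<Sum>x\<in>V. q x * G x v)) \<le>
               Phi (\<lambda>v. \<Sum>x\<in>V. P x * G x v) + real (card V) / 4"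
    using step[OF assms, of "\<lambda>v. \<Sum>x\<in>V. P x * G x v"] by blast
  have eq: "(\<lambda>v. \<Sum>x\<in>V. (P x + q x) * G x v) = (\<lambda>v. (\<Sum>x\<in>V. P x * G x v) + (\<Sum>x\<in>V. q x * G x v))"
    by (simp add: distrib_right sum.distrib)
  show ?case
  proof (intro exI[of _ "\<lambda>x. P x + q x"] conjI)
    show "\<forall>x\<in>V. 0 \<le> P x + q x" using P0 q0 by auto
    show "(\<Sum>x\<in>V. P x + q x) = real (Suc T)" using P1 q1 by (simp add: sum.distrib)
    show "Phi (\<lambda>v. \<Sum>x\<in>V. (P x + q x) * G x v) \<le> real (Suc T) * real (card V) / 4"
      unfolding eq using q2 P2 by (simp add: distrib_right add_divide_distrib)
  qed
qed

lemma minimax: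
  assumes "V \<noteq> {}" "e > 0"
  shows "\<exists>p. (\<forall>x\<in>V. p x \<ge> 0) \<and> (\<Sum>x\<in>V. p x) = 1 \<and> (\<forall>v\<in>V. (\<Sum>x\<in>V. p x * G x v) \<ge> - e)"
proof -
  define N where "N = nat \<lceil>1 / e^2\<rceil>"
  have e2: "e^2 > 0" using assms by simp
  have N1: "real N \<ge> 1 / e^2" unfolding N_def by linarith
  have Ne: "real N * e^2 \<ge> 1" using N1 e2 by (simp add: field_simps)
  define n where "n = card V"
  have n1: "n \<ge> 1" using assms finV unfolding n_def by (simp add: Suc_le_eq card_gt_0_iff)
  define T where "T = n * N"
  have Te: "real T * e^2 \<ge> real n" unfolding T_def using Ne n1
    by (simp add: mult.assoc)
  have "T \<noteq> 0" using Te n1 by (intro notI) simp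
  hence Tpos: "real T > 0" by simp
  obtain P where P0: "\<forall>x\<in>V. P x \<ge> 0" and P1: "(\<Sum>x\<in>V. P x) = real T"
    and P2: "Phi (\<lambda>v. \<Sum>x\<in>V. P x * G x v) \<le> real T * real (card V) / 4"
    using iter[OF assms(1)] by blast
  define p where "p x = P x / real T" for x
  show ?thesis
  proof (intro exI[of _ p] conjI ballI)
    show "\<And>x. x \<in> V \<Longrightarrow> p x \<ge> 0" unfolding p_def using P0 Tpos by simp
    show "(\<Sum>x\<in>V. p x) = 1" unfolding p_def using P1 Tpos by (simp flip: sum_divide_distrib)
  next
    fix v assume v: "v \<in> V"
    define u where "u = (\<Sum>x\<in>V. P x * G x v)"
    have "u \<ge> - (real T * e / 2)"
    proof (rule ccontr)
      assume "\<not> ?thesis"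
      hence un: "u < - (real T * e / 2)" by simp
      have "(min u 0)^2 \<le> Phi (\<lambda>v. \<Sum>x\<in>V. P x * G x v)"
        unfolding Phi_def u_def using v finV
        by (intro member_le_sum[where f = "\<lambda>v. (min (\<Sum>x\<in>V. P x * G x v) 0)^2"]) auto
      also have "\<dots> \<le> real T * real n / 4" using P2 unfolding n_def .
      also have "\<dots> \<le> real T * (real T * e^2) / 4" using Te Tpos by (intro divide_right_mono mult_left_mono) auto
      finally have "(min u 0)^2 \<le> (real T * e / 2)^2"
        by (simp add: power2_eq_square algebra_simps)
      moreover have Te0: "real T * e > 0" using Tpos assms by simp
      moreover have "min u 0 = u" using un Te0 by simp
      ultimately have A: "u^2 \<le> (real T * e / 2)^2" by simp
      have "real T * e / 2 < -u" "0 \<le> real T * e / 2" using un Te0 by auto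
      hence "(real T * e / 2)^2 < (-u)^2"
        using power_strict_mono[of "real T * e / 2" "-u" 2] by simp
      hence "(real T * e / 2)^2 < u^2" by simp
      with A
      show False by simp
    qed
    hence "u / real T \<ge> - (e/2)" using Tpos by (simp add: field_simps)
    moreover have "(\<Sum>x\<in>V. p x * G x v) = u / real T"
      unfolding p_def u_def by (simp add: sum_divide_distrib)
    ultimately show "(\<Sum>x\<in>V. p x * G x v) \<ge> - e" using assms by simp
  qed
qed

end


lemma doob_path:
  fixes D M :: "nat \<Rightarrow> real"
  assumes M0: "M 0 = 0" and MS: "\<And>t. M (Suc t) = max (M t) (D (Suc t))"
  shows "(M n)^2 \<le> 4 * (D n)^2 - 4 * (\<Sum>s<n. M s * (D (Suc s) - D s))"
proof -
  have H: "0 \<le> - 4 * (\<Sum>s<t. M s * (D (Suc s) - D s)) + 4 * M t * D t - 2 * (M t)^2" for t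
  proof (induction t)
    case 0 then show ?case using M0 by simp
  next
    case (Suc t)
    have step: "0 \<le> - 4 * M t * (D (Suc t) - D t) + 4 * M (Suc t) * D (Suc t) - 4 * M t * D t
                   - 2 * (M (Suc t))^2 + 2 * (M t)^2"
    proof (cases "D (Suc t) \<le> M t")
      case True
      hence "M (Suc t) = M t" using MS by simp
      then show ?thesis by (simp add: algebra_simps)
    next
      case False
      hence "M (Suc t) = D (Suc t)" using MS by simp
      moreover have "0 \<le> 2 * (D (Suc t) - M t)^2" by simp
      ultimately show ?thesis by (simp add: power2_eq_square algebra_simps)
    qed
    show ?case using Suc step by (simp add: algebra_simps)
  qed
  have "0 \<le> (2 * D n - M n)^2" by simp
  with H[of n] show ?thesis by (simp add: power2_eq_square algebra_simps)
qed

locale sampling = morders +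
  fixes p :: "nat \<Rightarrow> real" and lam :: real
  assumes p0: "\<And>x. x \<in> V \<Longrightarrow> p x \<ge> 0" and p1: "(\<Sum>x\<in>V. p x) = 1" and lam0: "lam > 0"
begin

definition pr :: "nat \<Rightarrow> real" where "pr x = min 1 (lam * p x)"
definition mu :: "nat \<Rightarrow> real" where "mu x = lam * p x"
definition c :: "nat \<Rightarrow> real" where "c x = (if pr x = 0 then 0 else mu x / pr x)"
definition Y :: "nat \<Rightarrow> nat set \<Rightarrow> real" where "Y x S = (if x \<in> S then c x else 0)"
definition d :: "nat \<Rightarrow> nat set \<Rightarrow> real" where "d x S = mu x - Y x S"
definition wt :: "nat set \<Rightarrow> nat set \<Rightarrow> real" where
  "wt A S = (\<Prod>x\<in>S. pr x) * (\<Prod>x\<in>A-S. 1 - pr x)"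
definition Ex :: "(nat set \<Rightarrow> real) \<Rightarrow> real" where
  "Ex f = (\<Sum>S\<in>Pow V. wt V S * f S)"

lemma mu0: "x \<in> V \<Longrightarrow> mu x \<ge> 0" unfolding mu_def using p0 lam0 by simp
lemma pr0: "x \<in> V \<Longrightarrow> pr x \<ge> 0" unfolding pr_def using mu0 mu_def by simp
lemma pr1: "pr x \<le> 1" unfolding pr_def by simp
lemma c0: "x \<in> V \<Longrightarrow> c x \<ge> 0" unfolding c_def using mu0 pr0 by simp
lemma prc: "x \<in> V \<Longrightarrow> pr x * c x = mu x"
  using mu0[of x] unfolding c_def pr_def mu_def by (auto simp: min_def split: if_splits)
lemma Y0: "x \<in> V \<Longrightarrow> Y x S \<ge> 0" unfolding Y_def using c0 by simp

lemma sum_mu: "(\<Sum>x\<in>V. mu x) = lam" unfolding mu_def using p1 by (simp flip: sum_distrib_left)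

lemma sum_mu_le: "A \<subseteq> V \<Longrightarrow> (\<Sum>x\<in>A. mu x) \<le> lam"
  using sum_mono2[OF finV, of A mu] mu0 sum_mu by auto

lemma wt0: "S \<subseteq> A \<Longrightarrow> A \<subseteq> V \<Longrightarrow> wt A S \<ge> 0"
  unfolding wt_def using pr0 pr1
  by (intro mult_nonneg_nonneg prod_nonneg) (auto simp: subset_iff)

lemma Ex1: "Ex (\<lambda>S. 1) = 1"
proof -
  have "(\<Prod>x\<in>V. pr x + (1 - pr x)) = (\<Sum>X\<in>Pow V. (\<Prod>x\<in>X. pr x) * (\<Prod>x\<in>V-X. 1 - pr x))"
    by (rule prod_add[OF finV])
  thus ?thesis unfolding Ex_def wt_def by simp
qed

lemma Ex_add: "Ex (\<lambda>S. f S + g S) = Ex f + Ex g"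
  unfolding Ex_def by (simp add: distrib_left sum.distrib)

lemma Ex_cmult: "Ex (\<lambda>S. k * f S) = k * Ex f"
  unfolding Ex_def by (simp add: sum_distrib_left mult_ac)

lemma Ex_const: "Ex (\<lambda>S. k) = k"
  using Ex_cmult[of k "\<lambda>S. 1"] Ex1 by simp

lemma Ex_sum: "Ex (\<lambda>S. \<Sum>j\<in>J. f j S) = (\<Sum>j\<in>J. Ex (f j))"
  unfolding Ex_def by (simp add: sum_distrib_left sum.swap[of _ J])

lemma Ex_mono: "(\<And>S. S \<subseteq> V \<Longrightarrow> f S \<le> g S) \<Longrightarrow> Ex f \<le> Ex g"
  unfolding Ex_def using wt0 by (intro sum_mono mult_left_mono) auto

lemma Ex_cong: "(\<And>S. S \<subseteq> V \<Longrightarrow> f S = g S) \<Longrightarrow> Ex f = Ex g"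
  unfolding Ex_def by (intro sum.cong) auto

lemma Ex_split:
  assumes a: "a \<in> V"
  shows "Ex F = (\<Sum>S\<in>Pow (V-{a}). wt (V-{a}) S * ((1 - pr a) * F S + pr a * F (insert a S)))"
proof -
  have PV: "Pow V = Pow (V-{a}) \<union> insert a ` Pow (V-{a})"
    using Pow_insert[of a "V-{a}"] a by (simp add: insert_absorb)
  have disj: "Pow (V-{a}) \<inter> insert a ` Pow (V-{a}) = {}" by auto
  have inj: "inj_on (insert a) (Pow (V-{a}))" unfolding inj_on_def by auto
  have fin: "finite (Pow (V-{a}))" using finV by simp
  have w1: "wt V S = (1 - pr a) * wt (V-{a}) S" if "S \<in> Pow (V-{a})" for S
  proof -
    have "V - S = insert a ((V-{a}) - S)" using that a by auto
    moreover have "finite ((V-{a}) - S)" using finV by simp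
    moreover have "a \<notin> (V-{a}) - S" by simp
    ultimately show ?thesis unfolding wt_def by (simp add: mult_ac)
  qed
  have w2: "wt V (insert a S) = pr a * wt (V-{a}) S" if "S \<in> Pow (V-{a})" for S
  proof -
    have "V - insert a S = (V-{a}) - S" using that a by auto
    moreover have "finite S" using that finV by (auto intro: finite_subset)
    moreover have "a \<notin> S" using that by auto
    ultimately show ?thesis unfolding wt_def by (simp add: mult_ac)
  qed
  have "Ex F = (\<Sum>S\<in>Pow (V-{a}). wt V S * F S) + (\<Sum>S\<in>insert a ` Pow (V-{a}). wt V S * F S)"
    unfolding Ex_def PV by (rule sum.union_disjoint) (use fin disj in auto)
  also have "(\<Sum>S\<in>insert a ` Pow (V-{a}). wt V S * F S) = (\<Sum>S\<in>Pow (V-{a}). wt V (insert a S) * F (insert a S))"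
    by (rule sum.reindex[OF inj, unfolded comp_def])
  finally have "Ex F = (\<Sum>S\<in>Pow (V-{a}). wt V S * F S + wt V (insert a S) * F (insert a S))"
    by (simp add: sum.distrib)
  also have "\<dots> = (\<Sum>S\<in>Pow (V-{a}). wt (V-{a}) S * ((1 - pr a) * F S + pr a * F (insert a S)))"
    by (rule sum.cong[OF refl]) (simp add: w1 w2 algebra_simps)
  finally show ?thesis .
qed

lemma Ex_indep:
  assumes a: "a \<in> V" and g: "\<And>S. g S = g (S - {a})"
  shows "Ex (\<lambda>S. g S * h (a \<in> S)) = (pr a * h True + (1 - pr a) * h False) * Ex g"
proof -
  have gi: "g (insert a S) = g S" if "S \<in> Pow (V-{a})" for S
    using g[of "insert a S"] g[of S] that by (metis Diff_insert_absorb Diff_subset_conv PowD insert_Diff_single subset_Diff_insert)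
  have aS: "a \<notin> S" if "S \<in> Pow (V-{a})" for S using that by auto
  have "Ex (\<lambda>S. g S * h (a \<in> S)) = (\<Sum>S\<in>Pow (V-{a}). wt (V-{a}) S * ((1 - pr a) * (g S * h False) + pr a * (g S * h True)))"
    unfolding Ex_split[OF a] using gi aS by (intro sum.cong refl) auto
  also have "\<dots> = (pr a * h True + (1 - pr a) * h False) * (\<Sum>S\<in>Pow (V-{a}). wt (V-{a}) S * g S)"
    by (simp add: sum_distrib_left algebra_simps)
  also have "(\<Sum>S\<in>Pow (V-{a}). wt (V-{a}) S * g S) = Ex g"
    unfolding Ex_split[OF a, of g] using gi by (intro sum.cong refl) (simp add: algebra_simps)
  finally show ?thesis .
qed

end


context sampling
begin

lemma d_indep: "x \<noteq> a \<Longrightarrow> d x S = d x (S - {a})"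
  unfolding d_def Y_def by simp

lemma Ex_d: "a \<in> V \<Longrightarrow> (\<And>S. g S = g (S - {a})) \<Longrightarrow> Ex (\<lambda>S. g S * d a S) = 0"
proof -
  assume a: "a \<in> V" and g: "\<And>S. g S = g (S - {a})"
  have "Ex (\<lambda>S. g S * d a S) = Ex (\<lambda>S. g S * (\<lambda>t. mu a - (if t then c a else 0)) (a \<in> S))"
    unfolding d_def Y_def by simp
  also have "\<dots> = (pr a * (mu a - c a) + (1 - pr a) * mu a) * Ex g"
    using Ex_indep[of a g "\<lambda>t. mu a - (if t then c a else 0)", OF a g] by simp
  also have "pr a * (mu a - c a) + (1 - pr a) * mu a = 0"
    using prc[OF a] by (simp add: algebra_simps)
  finally show ?thesis by simp
qed

lemma Ex_dd: "a \<in> V \<Longrightarrow> b \<in> V \<Longrightarrow> a \<noteq> b \<Longrightarrow> Ex (\<lambda>S. d b S * d a S) = 0"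
  by (rule Ex_d) (auto intro: d_indep)

lemma Ex_d2: "a \<in> V \<Longrightarrow> Ex (\<lambda>S. d a S * d a S) \<le> mu a"
proof -
  assume a: "a \<in> V"
  have "Ex (\<lambda>S. d a S * d a S) = Ex (\<lambda>S. 1 * (\<lambda>t. (mu a - (if t then c a else 0))^2) (a \<in> S))"
    unfolding d_def Y_def by (simp add: power2_eq_square)
  also have "\<dots> = (pr a * (mu a - c a)^2 + (1 - pr a) * (mu a)^2) * Ex (\<lambda>S. 1)"
    using Ex_indep[of a "\<lambda>S. 1" "\<lambda>t. (mu a - (if t then c a else 0))^2", OF a] by simp
  also have "\<dots> = pr a * (mu a - c a)^2 + (1 - pr a) * (mu a)^2" using Ex1 by simp
  also have "\<dots> \<le> mu a"
  proof -
    have m0: "mu a \<ge> 0" using mu0[OF a] .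
    consider "lam * p a \<ge> 1" | "lam * p a < 1" by linarith
    then show ?thesis
    proof cases
      case 1
      hence "pr a = 1" unfolding pr_def by simp
      moreover hence "c a = mu a" unfolding c_def by simp
      ultimately show ?thesis using m0 by simp
    next
      case 2
      hence pm: "pr a = mu a" unfolding pr_def mu_def by simp
      show ?thesis
      proof (cases "mu a = 0")
        case True thus ?thesis using pm by simp
      next
        case False
        hence "c a = 1" using pm unfolding c_def by simp
        hence "pr a * (mu a - c a)^2 + (1 - pr a) * (mu a)^2 = mu a * (1 - mu a)"
          using pm by (simp add: power2_eq_square algebra_simps)
        also have "\<dots> \<le> mu a" using m0 by (simp add: algebra_simps)
        finally show ?thesis .
      qed
    qed
  qed
  finally show ?thesis .
qed

lemma Ex_sumsq:
  assumes A: "A \<subseteq> V"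
  shows "Ex (\<lambda>S. (\<Sum>x\<in>A. d x S)^2) \<le> lam"
proof -
  have finA: "finite A" using A finV by (rule finite_subset)
  have "Ex (\<lambda>S. (\<Sum>x\<in>A. d x S)^2) = Ex (\<lambda>S. \<Sum>a\<in>A. \<Sum>b\<in>A. d b S * d a S)"
    by (simp add: power2_eq_square sum_product mult.commute)
  also have "\<dots> = (\<Sum>a\<in>A. \<Sum>b\<in>A. Ex (\<lambda>S. d b S * d a S))"
    by (simp add: Ex_sum)
  also have "\<dots> = (\<Sum>a\<in>A. Ex (\<lambda>S. d a S * d a S))"
  proof (rule sum.cong[OF refl])
    fix a assume a: "a \<in> A"
    have "(\<Sum>b\<in>A. Ex (\<lambda>S. d b S * d a S)) = (\<Sum>b\<in>A. if b = a then Ex (\<lambda>S. d a S * d a S) else 0)"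
      using a A Ex_dd by (intro sum.cong refl) auto
    also have "\<dots> = Ex (\<lambda>S. d a S * d a S)" using a finA by simp
    finally show "(\<Sum>b\<in>A. Ex (\<lambda>S. d b S * d a S)) = Ex (\<lambda>S. d a S * d a S)" .
  qed
  also have "\<dots> \<le> (\<Sum>a\<in>A. mu a)" using A Ex_d2 by (intro sum_mono) auto
  also have "\<dots> \<le> lam" using sum_mu_le[OF A] .
  finally show ?thesis .
qed

lemma Ex_card: "Ex (\<lambda>S. real (card S)) \<le> lam"
proof -
  have "Ex (\<lambda>S. real (card S)) = Ex (\<lambda>S. \<Sum>a\<in>V. 1 * (\<lambda>t. if t then 1 else 0) (a \<in> S))"
  proof (rule Ex_cong)
    fix S assume "S \<subseteq> V"
    hence "V \<inter> S = S" by auto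
    thus "real (card S) = (\<Sum>a\<in>V. 1 * (\<lambda>t. if t then 1 else 0) (a \<in> S))"
      using finV by (simp add: sum.If_cases)
  qed
  also have "\<dots> = (\<Sum>a\<in>V. Ex (\<lambda>S. 1 * (\<lambda>t. if t then 1 else (0::real)) (a \<in> S)))"
    by (rule Ex_sum)
  also have "\<dots> = (\<Sum>a\<in>V. pr a)"
  proof (rule sum.cong[OF refl])
    fix a assume a: "a \<in> V"
    show "Ex (\<lambda>S. 1 * (\<lambda>t. if t then 1 else (0::real)) (a \<in> S)) = pr a"
      using Ex_indep[OF a, of "\<lambda>S. 1" "\<lambda>t. if t then 1 else (0::real)"] Ex1 by simp
  qed
  also have "\<dots> \<le> (\<Sum>a\<in>V. mu a)" by (intro sum_mono) (simp add: pr_def mu_def)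
  finally show ?thesis using sum_mu by simp
qed

end


context sampling
begin

definition rk :: "nat \<Rightarrow> nat \<Rightarrow> nat" where "rk i x = card {y\<in>V. (y,x) \<in> L i}"
definition Dp :: "nat \<Rightarrow> nat \<Rightarrow> nat set \<Rightarrow> real" where
  "Dp i t S = (\<Sum>x\<in>{x\<in>V. rk i x \<le> t}. d x S)"

primrec mm :: "nat \<Rightarrow> nat \<Rightarrow> nat set \<Rightarrow> real" where
  "mm i 0 S = 0" | "mm i (Suc t) S = max (mm i t S) (Dp i (Suc t) S)"

lemma rk_iff:
  assumes i: "i < m" and x: "x \<in> V" and v: "v \<in> V"
  shows "(x,v) \<in> L i \<longleftrightarrow> rk i x \<le> rk i v"
proof
  assume "(x,v) \<in> L i"
  hence "{y\<in>V. (y,x) \<in> L i} \<subseteq> {y\<in>V. (y,v) \<in> L i}" using trans_L[OF i] by blast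
  thus "rk i x \<le> rk i v" unfolding rk_def by (rule card_mono[rotated]) (use finV in simp)
next
  assume le: "rk i x \<le> rk i v"
  show "(x,v) \<in> L i"
  proof (rule ccontr)
    assume n: "(x,v) \<notin> L i"
    hence "x \<noteq> v" using refl_L[OF i x] by auto
    hence vx: "(v,x) \<in> L i" using total_L[OF i x v] n by auto
    have "{y\<in>V. (y,v) \<in> L i} \<subset> {y\<in>V. (y,x) \<in> L i}"
      using trans_L[OF i _ vx] refl_L[OF i x] n x by blast
    hence "rk i v < rk i x" unfolding rk_def by (rule psubset_card_mono[rotated]) (use finV in simp)
    with le show False by simp
  qed
qed

lemma rk_bounds:
  assumes i: "i < m" and v: "v \<in> V"
  shows "1 \<le> rk i v" "rk i v \<le> card V"
proof -
  have "v \<in> {y\<in>V. (y,v) \<in> L i}" using refl_L[OF i v] v by simp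
  moreover have "finite {y\<in>V. (y,v) \<in> L i}" using finV by simp
  ultimately have "card {y\<in>V. (y,v) \<in> L i} > 0" by (auto simp: card_gt_0_iff)
  thus "1 \<le> rk i v" unfolding rk_def by simp
  show "rk i v \<le> card V" unfolding rk_def by (rule card_mono[OF finV]) auto
qed

lemma Dp_indep: "t < rk i a \<Longrightarrow> Dp i t S = Dp i t (S - {a})"
  unfolding Dp_def
proof (intro sum.cong refl)
  fix x assume "t < rk i a" "x \<in> {x \<in> V. rk i x \<le> t}"
  hence "x \<noteq> a" by auto
  thus "d x S = d x (S - {a})" by (rule d_indep)
qed

lemma mm_indep: "t < rk i a \<Longrightarrow> mm i t S = mm i t (S - {a})"
proof (induction t)
  case 0 show ?case by simp
next
  case (Suc t)
  thus ?case using Dp_indep[of "Suc t" i a S] by simp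
qed

lemma mm0: "mm i t S \<ge> 0"
  by (induction t) auto

lemma mm_mono: "s \<le> t \<Longrightarrow> mm i s S \<le> mm i t S"
proof (induction t)
  case 0 thus ?case by simp
next
  case (Suc t)
  show ?case
  proof (cases "s = Suc t")
    case True thus ?thesis by simp
  next
    case False
    hence "s \<le> t" using Suc.prems by simp
    hence "mm i s S \<le> mm i t S" by (rule Suc.IH)
    also have "\<dots> \<le> mm i (Suc t) S" by simp
    finally show ?thesis .
  qed
qed

lemma mm_ge: "1 \<le> t \<Longrightarrow> t \<le> n \<Longrightarrow> Dp i t S \<le> mm i n S"
proof -
  assume "1 \<le> t" "t \<le> n"
  then obtain t' where t': "t = Suc t'" by (cases t) auto
  have "Dp i t S \<le> mm i t S" using t' by simp
  also have "\<dots> \<le> mm i n S" by (rule mm_mono) fact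
  finally show ?thesis .
qed

lemma Dp_diff: "Dp i (Suc s) S - Dp i s S = (\<Sum>x\<in>{x\<in>V. rk i x = Suc s}. d x S)"
proof -
  have U: "{x\<in>V. rk i x \<le> Suc s} = {x\<in>V. rk i x \<le> s} \<union> {x\<in>V. rk i x = Suc s}" by auto
  have "Dp i (Suc s) S = Dp i s S + (\<Sum>x\<in>{x\<in>V. rk i x = Suc s}. d x S)"
    unfolding Dp_def U by (rule sum.union_disjoint) (use finV in auto)
  thus ?thesis by simp
qed

lemma Ex_mart: "Ex (\<lambda>S. mm i s S * (Dp i (Suc s) S - Dp i s S)) = 0"
proof -
  have "Ex (\<lambda>S. mm i s S * (Dp i (Suc s) S - Dp i s S)) =
        Ex (\<lambda>S. \<Sum>a\<in>{x\<in>V. rk i x = Suc s}. mm i s S * d a S)"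
    unfolding Dp_diff by (simp add: sum_distrib_left)
  also have "\<dots> = (\<Sum>a\<in>{x\<in>V. rk i x = Suc s}. Ex (\<lambda>S. mm i s S * d a S))"
    by (rule Ex_sum)
  also have "\<dots> = 0"
  proof (intro sum.neutral ballI)
    fix a assume a: "a \<in> {x\<in>V. rk i x = Suc s}"
    show "Ex (\<lambda>S. mm i s S * d a S) = 0"
    proof (rule Ex_d)
      show "a \<in> V" using a by simp
      fix S show "mm i s S = mm i s (S - {a})" by (rule mm_indep) (use a in simp)
    qed
  qed
  finally show ?thesis .
qed

lemma Ex_mm2: "Ex (\<lambda>S. (mm i n S)^2) \<le> 4 * lam"
proof -
  have "Ex (\<lambda>S. (mm i n S)^2) \<le>
        Ex (\<lambda>S. 4 * (Dp i n S)^2 + (- 4) * (\<Sum>s<n. mm i s S * (Dp i (Suc s) S - Dp i s S)))"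
  proof (rule Ex_mono)
    fix S
    have "(mm i n S)^2 \<le> 4 * (Dp i n S)^2 - 4 * (\<Sum>s<n. mm i s S * (Dp i (Suc s) S - Dp i s S))"
      by (rule doob_path[where M = "\<lambda>t. mm i t S" and D = "\<lambda>t. Dp i t S"]) simp_all
    thus "(mm i n S)^2 \<le> 4 * (Dp i n S)^2 + (- 4) * (\<Sum>s<n. mm i s S * (Dp i (Suc s) S - Dp i s S))"
      by simp
  qed
  also have "\<dots> = Ex (\<lambda>S. 4 * (Dp i n S)^2) + Ex (\<lambda>S. (- 4) * (\<Sum>s<n. mm i s S * (Dp i (Suc s) S - Dp i s S)))"
    by (rule Ex_add)
  also have "\<dots> = 4 * Ex (\<lambda>S. (Dp i n S)^2) + (- 4) * (\<Sum>s<n. Ex (\<lambda>S. mm i s S * (Dp i (Suc s) S - Dp i s S)))"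
    by (simp only: Ex_cmult Ex_sum)
  also have "\<dots> = 4 * Ex (\<lambda>S. (Dp i n S)^2)"
    by (simp only: Ex_mart sum.neutral_const)
  also have "\<dots> \<le> 4 * lam"
    using Ex_sumsq[of "{x\<in>V. rk i x \<le> n}"] unfolding Dp_def by simp
  finally show ?thesis .
qed

end


lemma amgm: fixes eps z :: real shows "(eps/200) * z \<le> z^2 * eps^2/16000 + 1/10"
proof -
  have "0 \<le> (eps*z - 40)^2" by simp
  thus ?thesis by (simp add: power2_eq_square algebra_simps)
qed

lemma card_as_sum: "real (card {i. i < (m::nat) \<and> P i}) = (\<Sum>i<m. if P i then 1 else (0::real))"
proof -
  have "{i. i < m \<and> P i} = {i\<in>{..<m}. P i}" by auto
  moreover have "(\<Sum>i\<in>{i\<in>{..<m}. P i}. (1::real)) = (\<Sum>i<m. if P i then 1 else 0)"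
    by (rule sum.inter_filter) simp
  ultimately show ?thesis by simp
qed

context sampling
begin

lemma Ex_exists: "Ex f < 1 \<Longrightarrow> \<exists>S. S \<subseteq> V \<and> f S < 1"
proof (rule ccontr)
  assume a: "Ex f < 1" and "\<not> (\<exists>S. S \<subseteq> V \<and> f S < 1)"
  hence "\<And>S. S \<subseteq> V \<Longrightarrow> 1 \<le> f S" by auto
  hence "Ex (\<lambda>S. 1) \<le> Ex f" by (rule Ex_mono)
  with a Ex1 show False by simp
qed

lemma final:
  assumes e0: "0 < eps" and e1: "eps < 1/2" and lamdef: "lam = 400 / eps^2"
    and hyp: "\<And>v. v \<in> V \<Longrightarrow> (\<Sum>i<m. \<Sum>x\<in>{x\<in>V. (x,v) \<in> L i}. p x) \<ge> real m * (1/2 - eps/2)"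
  shows "\<exists>S. dominating V (majority_arc (1/2 - eps) m L V) S \<and> real (card S) \<le> 1600 / eps^2"
proof -
  define n where "n = card V"
  have mpos: "real m > 0" using m1 by simp
  define k1 where "k1 = eps^2 / (16000 * real m)"
  define k2 where "k2 = eps^2 / 32000"
  define k3 where "k3 = eps^2 / 1600"
  define F where "F S = k1 * (\<Sum>i<m. (mm i n S)^2) + k2 * (\<Sum>x\<in>V. d x S)^2 + k3 * real (card S) + 3/20" for S
  have k1n: "k1 \<ge> 0" "k2 \<ge> 0" "k3 \<ge> 0" unfolding k1_def k2_def k3_def by simp_all
  have "Ex F = k1 * (\<Sum>i<m. Ex (\<lambda>S. (mm i n S)^2)) + k2 * Ex (\<lambda>S. (\<Sum>x\<in>V. d x S)^2)
               + k3 * Ex (\<lambda>S. real (card S)) + 3/20"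
    unfolding F_def by (simp only: Ex_add Ex_cmult Ex_sum Ex_const)
  also have "\<dots> \<le> k1 * (\<Sum>i<m. 4 * lam) + k2 * lam + k3 * lam + 3/20"
    using Ex_mm2 Ex_sumsq[of V] Ex_card k1n
    by (intro add_mono mult_left_mono sum_mono order_refl) auto
  also have "\<dots> = 4 * eps^2 * lam / 16000 + eps^2 * lam / 32000 + eps^2 * lam / 1600 + 3/20"
    unfolding k1_def k2_def k3_def using mpos by (simp add: field_simps)
  also have "\<dots> = 1/10 + 1/80 + 1/4 + 3/20"
    unfolding lamdef using e0 by (simp add: field_simps)
  finally have "Ex F < 1" by simp
  then obtain S where SV: "S \<subseteq> V" and FS: "F S < 1" using Ex_exists by blast
  define A where "A = (1 / real m) * (\<Sum>i<m. mm i n S)"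
  define B where "B = \<bar>\<Sum>x\<in>V. d x S\<bar>"
  have A0: "A \<ge> 0" unfolding A_def using mm0 by (simp add: sum_nonneg)
  have B0: "B \<ge> 0" unfolding B_def by simp
  have "(eps/200) * A = (1 / real m) * (\<Sum>i<m. (eps/200) * mm i n S)"
    unfolding A_def by (simp add: sum_distrib_left ac_simps)
  also have "\<dots> \<le> (1 / real m) * (\<Sum>i<m. (mm i n S)^2 * eps^2/16000 + 1/10)"
    using mpos by (intro mult_left_mono sum_mono amgm) auto
  also have "\<dots> = k1 * (\<Sum>i<m. (mm i n S)^2) + 1/10"
    unfolding k1_def using mpos by (simp add: sum.distrib sum_divide_distrib[symmetric] field_simps sum_distrib_left)
  finally have IA: "(eps/200) * A \<le> k1 * (\<Sum>i<m. (mm i n S)^2) + 1/10" .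
  have "(eps/200) * (B/2) \<le> (1/2) * (B^2 * eps^2/16000 + 1/10)"
    using amgm[of eps B] by (simp add: mult.commute)
  also have "\<dots> = k2 * (\<Sum>x\<in>V. d x S)^2 + 1/20"
    unfolding k2_def B_def by (simp add: field_simps)
  finally have IB: "(eps/200) * (B/2) \<le> k2 * (\<Sum>x\<in>V. d x S)^2 + 1/20" .
  have "(eps/200) * (A + B/2) + k3 * real (card S) \<le> F S"
    using IA IB unfolding F_def by (simp add: distrib_left)
  with FS have main: "(eps/200) * (A + B/2) + k3 * real (card S) < 1" by simp
  have AB0: "(eps/200) * (A + B/2) \<ge> 0" using A0 B0 e0 by simp
  have C0: "k3 * real (card S) \<ge> 0" using k1n by simp
  have cardS: "real (card S) \<le> 1600 / eps^2"
  proof -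
    have "k3 * real (card S) < 1" using main AB0 by linarith
    thus ?thesis unfolding k3_def using e0 by (simp add: field_simps)
  qed
  have ABlt: "A + B/2 < 200 / eps"
  proof -
    have "(eps/200) * (A + B/2) < 1" using main C0 by linarith
    thus ?thesis using e0 by (simp add: field_simps)
  qed
  have dom: "dominating V (majority_arc (1/2 - eps) m L V) S"
    unfolding dominating_def
  proof (intro conjI ballI)
    show "S \<subseteq> V" by fact
    fix v assume v: "v \<in> V"
    show "v \<in> S \<or> (\<exists>x\<in>S. majority_arc (1/2 - eps) m L V x v)"
    proof (rule ccontr)
      assume "\<not> ?thesis"
      hence vS: "v \<notin> S" and nx: "\<And>x. x \<in> S \<Longrightarrow> \<not> majority_arc (1/2 - eps) m L V x v" by auto
      define cs where "cs x = real (card {i. i < m \<and> strict_lt (L i) x v})" for x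
      have csb: "cs x < (1/2 - eps) * real m" if "x \<in> S" for x
      proof -
        have "x \<in> V" "x \<noteq> v" using that SV vS by auto
        thus ?thesis using nx[OF that] v unfolding majority_arc_def cs_def by auto
      qed
      have Yv: "Y v S = 0" unfolding Y_def using vS by simp
      have "(\<Sum>x\<in>V. Y x S * cs x) \<le> (\<Sum>x\<in>V. Y x S * ((1/2 - eps) * real m))"
      proof (intro sum_mono)
        fix x assume x: "x \<in> V"
        show "Y x S * cs x \<le> Y x S * ((1/2 - eps) * real m)"
        proof (cases "x \<in> S")
          case True thus ?thesis using csb[OF True] Y0[OF x] by (intro mult_left_mono) auto
        next
          case False thus ?thesis unfolding Y_def by simp
        qed
      qed
      also have "\<dots> = (1/2 - eps) * real m * (\<Sum>x\<in>V. Y x S)"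
        by (simp add: sum_distrib_left mult_ac)
      also have "(\<Sum>x\<in>V. Y x S) = lam - (\<Sum>x\<in>V. d x S)"
        unfolding d_def by (simp add: sum_subtractf sum_mu)
      finally have up: "(\<Sum>x\<in>V. Y x S * cs x) \<le> (1/2 - eps) * real m * (lam - (\<Sum>x\<in>V. d x S))" .
      have "(\<Sum>x\<in>V. Y x S * cs x) = (\<Sum>x\<in>V. \<Sum>i<m. Y x S * (if strict_lt (L i) x v then 1 else 0))"
        unfolding cs_def card_as_sum by (simp add: sum_distrib_left)
      also have "\<dots> = (\<Sum>i<m. \<Sum>x\<in>V. Y x S * (if strict_lt (L i) x v then 1 else 0))"
        by (rule sum.swap)
      also have "\<dots> = (\<Sum>i<m. \<Sum>x\<in>{x\<in>V. (x,v) \<in> L i}. Y x S)"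
      proof (rule sum.cong[OF refl])
        fix i assume "i \<in> {..<m}"
        have "(\<Sum>x\<in>V. Y x S * (if strict_lt (L i) x v then 1 else 0)) =
              (\<Sum>x\<in>V. if (x,v) \<in> L i then Y x S else 0)"
          by (intro sum.cong refl) (auto simp: strict_lt_def Yv)
        also have "\<dots> = (\<Sum>x\<in>{x\<in>V. (x,v) \<in> L i}. Y x S)"
          by (rule sum.inter_filter[symmetric]) (rule finV)
        finally show "(\<Sum>x\<in>V. Y x S * (if strict_lt (L i) x v then 1 else 0)) = (\<Sum>x\<in>{x\<in>V. (x,v) \<in> L i}. Y x S)" .
      qed
      also have "\<dots> \<ge> (\<Sum>i<m. lam * (\<Sum>x\<in>{x\<in>V. (x,v) \<in> L i}. p x) - mm i n S)"
      proof (rule sum_mono)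
        fix i assume i: "i \<in> {..<m}"
        have eqs: "{x\<in>V. (x,v) \<in> L i} = {x\<in>V. rk i x \<le> rk i v}" using rk_iff[of i _ v] i v by auto
        have "(\<Sum>x\<in>{x\<in>V. (x,v) \<in> L i}. Y x S) = (\<Sum>x\<in>{x\<in>V. (x,v) \<in> L i}. mu x - d x S)"
          unfolding d_def by simp
        also have "\<dots> = lam * (\<Sum>x\<in>{x\<in>V. (x,v) \<in> L i}. p x) - Dp i (rk i v) S"
          unfolding Dp_def eqs[symmetric] by (simp add: sum_subtractf mu_def sum_distrib_left)
        finally have eqY: "(\<Sum>x\<in>{x\<in>V. (x,v) \<in> L i}. Y x S) = lam * (\<Sum>x\<in>{x\<in>V. (x,v) \<in> L i}. p x) - Dp i (rk i v) S" .
        have "Dp i (rk i v) S \<le> mm i n S"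
          using rk_bounds[of i v] i v unfolding n_def by (intro mm_ge) auto
        with eqY show "lam * (\<Sum>x\<in>{x\<in>V. (x,v) \<in> L i}. p x) - mm i n S \<le> (\<Sum>x\<in>{x\<in>V. (x,v) \<in> L i}. Y x S)"
          by linarith
      qed
      also have "(\<Sum>i<m. lam * (\<Sum>x\<in>{x\<in>V. (x,v) \<in> L i}. p x) - mm i n S) =
                 lam * (\<Sum>i<m. \<Sum>x\<in>{x\<in>V. (x,v) \<in> L i}. p x) - real m * A"
        unfolding A_def using mpos by (simp add: sum_subtractf sum_distrib_left)
      finally have low: "lam * (\<Sum>i<m. \<Sum>x\<in>{x\<in>V. (x,v) \<in> L i}. p x) - real m * A \<le> (\<Sum>x\<in>V. Y x S * cs x)" .
      have lam0': "lam \<ge> 0" using lam0 by simp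
      have "lam * (real m * (1/2 - eps/2)) \<le> lam * (\<Sum>i<m. \<Sum>x\<in>{x\<in>V. (x,v) \<in> L i}. p x)"
        using hyp[OF v] lam0' by (rule mult_left_mono)
      with low up have ineq: "lam * (real m * (1/2 - eps/2)) - real m * A \<le> (1/2 - eps) * real m * (lam - (\<Sum>x\<in>V. d x S))"
        by linarith
      have "- (\<Sum>x\<in>V. d x S) \<le> B" unfolding B_def by simp
      hence "(1/2 - eps) * (- (\<Sum>x\<in>V. d x S)) \<le> (1/2 - eps) * B" using e1 by (intro mult_left_mono) auto
      moreover have "(1/2 - eps) * B \<le> B / 2" using B0 e0 by (simp add: algebra_simps)
      moreover have "real m * (lam * (1/2 - eps/2) - A) \<le> real m * ((1/2 - eps) * (lam - (\<Sum>x\<in>V. d x S)))"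
        using ineq by (simp add: algebra_simps)
      hence "lam * (1/2 - eps/2) - A \<le> (1/2 - eps) * (lam - (\<Sum>x\<in>V. d x S))"
        using mpos by simp
      ultimately have "lam * eps / 2 \<le> A + B/2" by (simp add: algebra_simps)
      moreover have "lam * eps / 2 = 200 / eps" unfolding lamdef using e0 by (simp add: field_simps power2_eq_square)
      ultimately show False using ABlt by simp
    qed
  qed
  show ?thesis using dom cardS by blast
qed

end


lemma dom_le: "dominating V E S \<Longrightarrow> domination_number V E \<le> card S"
  unfolding domination_number_def by (rule Least_le) blast

lemma (in morders) hyp_from_G:
  assumes p1: "(\<Sum>x\<in>V. p x) = 1" and v: "v \<in> V"
    and G: "(\<Sum>x\<in>V. p x * G x v) \<ge> - (eps/2)"
  shows "(\<Sum>i<m. \<Sum>x\<in>{x\<in>V. (x,v) \<in> L i}. p x) \<ge> real m * (1/2 - eps/2)"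
proof -
  have mpos: "real m > 0" using m1 by simp
  have "(\<Sum>x\<in>V. p x * G x v) = (\<Sum>x\<in>V. p x * real (cnt x v)) / real m - (\<Sum>x\<in>V. p x) / 2"
    unfolding G_def by (simp add: right_diff_distrib sum_subtractf sum_divide_distrib sum_distrib_left)
  also have "(\<Sum>x\<in>V. p x * real (cnt x v)) = (\<Sum>i<m. \<Sum>x\<in>{x\<in>V. (x,v) \<in> L i}. p x)"
  proof -
    have "(\<Sum>x\<in>V. p x * real (cnt x v)) = (\<Sum>x\<in>V. \<Sum>i<m. p x * (if (x,v) \<in> L i then 1 else 0))"
      unfolding cnt_def card_as_sum by (simp add: sum_distrib_left)
    also have "\<dots> = (\<Sum>i<m. \<Sum>x\<in>V. p x * (if (x,v) \<in> L i then 1 else 0))" by (rule sum.swap)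
    also have "\<dots> = (\<Sum>i<m. \<Sum>x\<in>{x\<in>V. (x,v) \<in> L i}. p x)"
    proof (rule sum.cong[OF refl])
      fix i
      have "(\<Sum>x\<in>V. p x * (if (x,v) \<in> L i then 1 else 0)) = (\<Sum>x\<in>V. if (x,v) \<in> L i then p x else 0)"
        by (intro sum.cong refl) auto
      also have "\<dots> = (\<Sum>x\<in>{x\<in>V. (x,v) \<in> L i}. p x)" by (rule sum.inter_filter[symmetric]) (rule finV)
      finally show "(\<Sum>x\<in>V. p x * (if (x,v) \<in> L i then 1 else 0)) = (\<Sum>x\<in>{x\<in>V. (x,v) \<in> L i}. p x)" .
    qed
    finally show ?thesis .
  qed
  finally have "(\<Sum>i<m. \<Sum>x\<in>{x\<in>V. (x,v) \<in> L i}. p x) / real m - 1/2 \<ge> - (eps/2)"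
    using G p1 by simp
  hence "(\<Sum>i<m. \<Sum>x\<in>{x\<in>V. (x,v) \<in> L i}. p x) / real m \<ge> 1/2 - eps/2" by simp
  thus ?thesis using mpos by (simp add: field_simps)
qed

theorem theorem1p15:
  shows "\<exists>C::real. C > 0 \<and>
    (\<forall>(\<epsilon>::real) (m::nat) (V::nat set) (L::nat \<Rightarrow> nat rel).
       0 < \<epsilon> \<and> \<epsilon> < 1/2 \<and> m \<ge> 1 \<and> finite V \<and>
       (\<forall>i<m. linear_order_on V (L i)) \<longrightarrow>
       real (domination_number V (majority_arc (1/2 - \<epsilon>) m L V)) \<le> C / \<epsilon>^2)"
proof (intro exI[of _ 1600] conjI allI impI)
  fix \<epsilon> :: real and m :: nat and V :: "nat set" and L :: "nat \<Rightarrow> nat rel"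
  assume H: "0 < \<epsilon> \<and> \<epsilon> < 1/2 \<and> m \<ge> 1 \<and> finite V \<and> (\<forall>i<m. linear_order_on V (L i))"
  hence e0: "0 < \<epsilon>" and e1: "\<epsilon> < 1/2" by auto
  interpret morders V L m using H by unfold_locales auto
  show "real (domination_number V (majority_arc (1/2 - \<epsilon>) m L V)) \<le> 1600 / \<epsilon>^2"
  proof (cases "V = {}")
    case True
    have "dominating V (majority_arc (1/2 - \<epsilon>) m L V) {}" unfolding dominating_def using True by simp
    hence "domination_number V (majority_arc (1/2 - \<epsilon>) m L V) = 0" using dom_le by fastforce
    thus ?thesis using e0 by simp
  next
    case False
    obtain p where p0: "\<forall>x\<in>V. p x \<ge> 0" and p1: "(\<Sum>x\<in>V. p x) = 1"
      and pG: "\<forall>v\<in>V. (\<Sum>x\<in>V. p x * G x v) \<ge> - (\<epsilon>/2)"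
      using minimax[OF False, of "\<epsilon>/2"] e0 by auto
    interpret sampling V L m p "400 / \<epsilon>^2"
      using p0 p1 e0 by unfold_locales auto
    obtain S where S: "dominating V (majority_arc (1/2 - \<epsilon>) m L V) S" "real (card S) \<le> 1600 / \<epsilon>^2"
      using final[OF e0 e1 refl hyp_from_G[OF p1 _ pG[rule_format]]] by blast
    have "real (domination_number V (majority_arc (1/2 - \<epsilon>) m L V)) \<le> real (card S)"
      using dom_le[OF S(1)] by simp
    with S(2) show ?thesis by linarith
  qed
qed simp



end
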